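(* Let $(x_t)_{t\in\Omega}$ be a continuous frame for a Hilbert space $H$ with analysis operator $\Theta:H\to L_2(\Omega)$, and let $x,y\in H$ be such that $x\neq\lambda y$ for every scalar $|\lambda|=1$. Then there exist $x_o,y_o\in \operatorname{span}\{x,y\}$ with $\|x_o\|=1$, $\|y_o\|\le 1$ and $\langle x_o,y_o\rangle=0$ such that $$\frac{\big\||\Theta x|-|\Theta y|\big\|}{\min_{|\lambda|=1}\|x-\lambda y\|}\ \ge\ \frac{\big\||\Theta x_o|-|\Theta y_o|\big\|}{\min_{|\lambda|=1}\|x_o-\lambda y_o\|}\ =\ \frac{\big\||\Theta x_o|-|\Theta y_o|\big\|}{(1+\|y_o\|^2)^{1/2}}.$$
   Context: $H$ is a real or complex Hilbert space; scalars $\lambda$ range over the field of $H$. A family $(x_t)_{t\in\Omega}\subseteq H$ indexed by a measure space $(\Omega,\mu)$ (with $t\mapsto\langle x,x_t\rangle$ measurable for each $x$) is a continuous frame if there are constants $B\ge A>0$ with $A\|x\|^2\le\int_\Omega|\langle x,x_t\rangle|^2\,d\mu(t)\le B\|x\|^2$ for all $x\in H$; $A$ is a lower frame bound. Its analysis operator is $\Theta:H\to L_2(\Omega)$, $\Theta(x)=(\langle x,x_t\rangle)_{t\in\Omega}$, and $|\Theta x|$ denotes the function $t\mapsto|\langle x,x_t\rangle|$. Norms of $|\Theta x|-|\Theta y|$ are taken in $L_2(\Omega)$. A (discrete) frame is the case of counting measure on a countable index set. *)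

theory Defs
  imports "HOL-Analysis.Analysis"
begin

class complex_inner = real_normed_vector +
  fixes scaleC :: "complex \<Rightarrow> 'a \<Rightarrow> 'a" (infixr \<open>*\<^sub>C\<close> 75)
    and cinner :: "'a \<Rightarrow> 'a \<Rightarrow> complex"
  assumes scaleC_add_right: "a *\<^sub>C (x + y) = a *\<^sub>C x + a *\<^sub>C y"
    and scaleC_add_left: "(a + b) *\<^sub>C x = a *\<^sub>C x + b *\<^sub>C x"
    and scaleC_scaleC: "a *\<^sub>C (b *\<^sub>C x) = (a * b) *\<^sub>C x"
    and scaleC_one: "1 *\<^sub>C x = x"
    and scaleR_scaleC: "scaleR r x = complex_of_real r *\<^sub>C x"
    and cinner_add_left: "cinner (x + y) z = cinner x z + cinner y z"
    and cinner_scaleC_left: "cinner (a *\<^sub>C x) y = a * cinner x y"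
    and cinner_commute: "cinner x y = cnj (cinner y x)"
    and cinner_self_nonneg: "0 \<le> Re (cinner x x)"
    and norm_eq_sqrt_cinner: "norm x = sqrt (Re (cinner x x))"

definition rframe :: "'t measure \<Rightarrow> ('t \<Rightarrow> 'a::{real_inner,complete_space}) \<Rightarrow> bool" where
  "rframe M xt \<longleftrightarrow>
     (\<forall>x. (\<lambda>t. inner x (xt t)) \<in> borel_measurable M) \<and>
     (\<exists>A B. 0 < A \<and> A \<le> B \<and>
        (\<forall>x. ennreal (A * (norm x)\<^sup>2) \<le> (\<integral>\<^sup>+ t. ennreal ((inner x (xt t))\<^sup>2) \<partial>M) \<and>
             (\<integral>\<^sup>+ t. ennreal ((inner x (xt t))\<^sup>2) \<partial>M) \<le> ennreal (B * (norm x)\<^sup>2)))"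

definition rphase_dist :: "'t measure \<Rightarrow> ('t \<Rightarrow> 'a::real_inner) \<Rightarrow> 'a \<Rightarrow> 'a \<Rightarrow> real" where
  "rphase_dist M xt x y =
     sqrt (enn2real (\<integral>\<^sup>+ t. ennreal ((\<bar>inner x (xt t)\<bar> - \<bar>inner y (xt t)\<bar>)\<^sup>2) \<partial>M))"

definition rmin_unimod :: "'a::real_normed_vector \<Rightarrow> 'a \<Rightarrow> real" where
  "rmin_unimod x y = Inf {norm (x - l *\<^sub>R y) | l::real. \<bar>l\<bar> = 1}"

definition cframe :: "'t measure \<Rightarrow> ('t \<Rightarrow> 'a::{complex_inner,complete_space}) \<Rightarrow> bool" where
  "cframe M xt \<longleftrightarrow>
     (\<forall>x. (\<lambda>t. cinner x (xt t)) \<in> borel_measurable M) \<and>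
     (\<exists>A B. 0 < A \<and> A \<le> B \<and>
        (\<forall>x. ennreal (A * (norm x)\<^sup>2) \<le> (\<integral>\<^sup>+ t. ennreal ((cmod (cinner x (xt t)))\<^sup>2) \<partial>M) \<and>
             (\<integral>\<^sup>+ t. ennreal ((cmod (cinner x (xt t)))\<^sup>2) \<partial>M) \<le> ennreal (B * (norm x)\<^sup>2)))"

definition cphase_dist :: "'t measure \<Rightarrow> ('t \<Rightarrow> 'a::complex_inner) \<Rightarrow> 'a \<Rightarrow> 'a \<Rightarrow> real" where
  "cphase_dist M xt x y =
     sqrt (enn2real (\<integral>\<^sup>+ t. ennreal ((cmod (cinner x (xt t)) - cmod (cinner y (xt t)))\<^sup>2) \<partial>M))"

definition cmin_unimod :: "'a::complex_inner \<Rightarrow> 'a \<Rightarrow> real" where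
  "cmin_unimod x y = Inf {norm (x - l *\<^sub>C y) | l::complex. cmod l = 1}"

end

theory Submission
  imports Defs
begin

definition DD :: "'t measure \<Rightarrow> ('t \<Rightarrow> real) \<Rightarrow> ('t \<Rightarrow> real) \<Rightarrow> real" where
 "DD M f g = sqrt (enn2real (\<integral>\<^sup>+ t. ennreal ((f t - g t)\<^sup>2) \<partial>M))"

lemma DD_sym: "DD M f g = DD M g f"
  unfolding DD_def by (simp add: power2_commute)

lemma DD_finite:
  assumes "f \<in> borel_measurable M" "g \<in> borel_measurable M"
   "\<forall>t. 0 \<le> f t" "\<forall>t. 0 \<le> g t"
   "(\<integral>\<^sup>+ t. ennreal ((f t)\<^sup>2) \<partial>M) < \<infinity>" "(\<integral>\<^sup>+ t. ennreal ((g t)\<^sup>2) \<partial>M) < \<infinity>"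
  shows "(\<integral>\<^sup>+ t. ennreal ((f t - g t)\<^sup>2) \<partial>M) < \<infinity>"
proof -
  have "(\<integral>\<^sup>+ t. ennreal ((f t - g t)\<^sup>2) \<partial>M) \<le> (\<integral>\<^sup>+ t. ennreal ((f t)\<^sup>2) + ennreal ((g t)\<^sup>2) \<partial>M)"
  proof (rule nn_integral_mono)
    fix t
    have "0 \<le> f t * g t" using assms(3,4) by simp
    then have "(f t - g t)\<^sup>2 \<le> (f t)\<^sup>2 + (g t)\<^sup>2"
      by (simp add: power2_eq_square algebra_simps)
    then show "ennreal ((f t - g t)\<^sup>2) \<le> ennreal ((f t)\<^sup>2) + ennreal ((g t)\<^sup>2)"
      by (simp add: ennreal_plus[symmetric] del: ennreal_plus)
  qed
  also have "\<dots> = (\<integral>\<^sup>+ t. ennreal ((f t)\<^sup>2) \<partial>M) + (\<integral>\<^sup>+ t. ennreal ((g t)\<^sup>2) \<partial>M)"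
    by (rule nn_integral_add) (use assms in auto)
  also have "\<dots> < \<infinity>" using assms by simp
  finally show ?thesis .
qed

lemma DD_mono:
  assumes "\<And>t. \<bar>f' t - g' t\<bar> \<le> \<bar>f t - g t\<bar>"
    "(\<integral>\<^sup>+ t. ennreal ((f t - g t)\<^sup>2) \<partial>M) < \<infinity>"
  shows "DD M f' g' \<le> DD M f g"
  unfolding DD_def
proof (rule real_sqrt_le_mono, rule enn2real_mono)
  show "(\<integral>\<^sup>+ t. ennreal ((f' t - g' t)\<^sup>2) \<partial>M) \<le> (\<integral>\<^sup>+ t. ennreal ((f t - g t)\<^sup>2) \<partial>M)"
    by (rule nn_integral_mono) (use assms(1) in \<open>simp add: ennreal_leI abs_le_square_iff[symmetric]\<close>)
qed (use assms in auto)

lemma DD_scale: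
  assumes "f \<in> borel_measurable M" "g \<in> borel_measurable M" "0 \<le> r"
  shows "DD M (\<lambda>t. r * f t) (\<lambda>t. r * g t) = r * DD M f g"
proof -
  have "(\<integral>\<^sup>+ t. ennreal ((r * f t - r * g t)\<^sup>2) \<partial>M) = (\<integral>\<^sup>+ t. ennreal (r\<^sup>2) * ennreal ((f t - g t)\<^sup>2) \<partial>M)"
  proof (rule nn_integral_cong)
    fix t
    have "(r * f t - r * g t)\<^sup>2 = r\<^sup>2 * (f t - g t)\<^sup>2" by (simp add: power2_eq_square algebra_simps)
    then show "ennreal ((r * f t - r * g t)\<^sup>2) = ennreal (r\<^sup>2) * ennreal ((f t - g t)\<^sup>2)"
      by (simp add: ennreal_mult)
  qed
  also have "\<dots> = ennreal (r\<^sup>2) * (\<integral>\<^sup>+ t. ennreal ((f t - g t)\<^sup>2) \<partial>M)"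
    by (rule nn_integral_cmult) (use assms in measurable)
  finally show ?thesis unfolding DD_def using assms(3)
    by (simp add: enn2real_mult real_sqrt_mult)
qed

lemma core:
  fixes p q :: "'v::real_inner"
  assumes c: "0 \<le> c" "c \<le> 1"
  shows "\<bar>norm (c *\<^sub>R p + q) - norm (c *\<^sub>R p - q)\<bar> \<le> \<bar>norm (p + q) - norm (p - q)\<bar>"
proof -
  define S where "S = norm (c *\<^sub>R p + q) + norm (c *\<^sub>R p - q)"
  define S1 where "S1 = norm (p + q) + norm (p - q)"
  define Dc where "Dc = norm (c *\<^sub>R p + q) - norm (c *\<^sub>R p - q)"
  define D1 where "D1 = norm (p + q) - norm (p - q)"
  have e1: "Dc * S = 4 * c * inner p q"
    unfolding Dc_def S_def
    by (simp add: algebra_simps power2_eq_square[symmetric] power2_norm_eq_inner inner_add inner_diff inner_commute)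
  have e2: "D1 * S1 = 4 * inner p q"
    unfolding D1_def S1_def
    by (simp add: algebra_simps power2_eq_square[symmetric] power2_norm_eq_inner inner_add inner_diff inner_commute)
  have t1: "c * norm (p + q) \<le> ((1+c)/2) * norm (c *\<^sub>R p + q) + ((1-c)/2) * norm (c *\<^sub>R p - q)"
  proof -
    have "c *\<^sub>R (p + q) = ((1+c)/2) *\<^sub>R (c *\<^sub>R p + q) + ((1-c)/2) *\<^sub>R (c *\<^sub>R p - q)"
      by (simp add: scaleR_add_right scaleR_diff_right scaleR_add_left scaleR_diff_left add_divide_distrib diff_divide_distrib algebra_simps) (simp add: add.assoc[symmetric] scaleR_add_left[symmetric])
    then have "norm (c *\<^sub>R (p + q)) \<le> norm (((1+c)/2) *\<^sub>R (c *\<^sub>R p + q)) + norm (((1-c)/2) *\<^sub>R (c *\<^sub>R p - q))"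
      by (metis norm_triangle_ineq)
    then show ?thesis using c by simp
  qed
  have t2: "c * norm (p - q) \<le> ((1-c)/2) * norm (c *\<^sub>R p + q) + ((1+c)/2) * norm (c *\<^sub>R p - q)"
  proof -
    have "c *\<^sub>R (p - q) = ((1-c)/2) *\<^sub>R (c *\<^sub>R p + q) + ((1+c)/2) *\<^sub>R (c *\<^sub>R p - q)"
      by (simp add: scaleR_add_right scaleR_diff_right scaleR_add_left scaleR_diff_left add_divide_distrib diff_divide_distrib algebra_simps) (simp add: add.assoc[symmetric] scaleR_add_left[symmetric])
    then have "norm (c *\<^sub>R (p - q)) \<le> norm (((1-c)/2) *\<^sub>R (c *\<^sub>R p + q)) + norm (((1+c)/2) *\<^sub>R (c *\<^sub>R p - q))"
      by (metis norm_triangle_ineq)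
    then show ?thesis using c by simp
  qed
  have cS: "c * S1 \<le> S" using t1 t2 unfolding S_def S1_def by (simp add: algebra_simps add_divide_distrib[symmetric])
  show ?thesis
  proof (cases "S = 0")
    case True
    then have "Dc = 0" unfolding S_def Dc_def
      by (smt (verit) norm_ge_zero)
    then show ?thesis unfolding Dc_def by simp
  next
    case False
    then have Sp: "S > 0" unfolding S_def by (smt (verit) norm_ge_zero)
    have S10: "S1 \<ge> 0" unfolding S1_def by simp
    have "\<bar>Dc\<bar> * S = \<bar>Dc * S\<bar>" using Sp by (simp add: abs_mult)
    also have "\<dots> = c * \<bar>D1 * S1\<bar>" unfolding e1 e2 using c by (simp add: abs_mult)
    also have "\<dots> = c * (\<bar>D1\<bar> * S1)" using S10 by (simp add: abs_mult)
    also have "\<dots> = \<bar>D1\<bar> * (c * S1)" by (simp add: ac_simps)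
    also have "\<dots> \<le> \<bar>D1\<bar> * S" using cS by (simp add: mult_left_mono)
    finally have "\<bar>Dc\<bar> * S \<le> \<bar>D1\<bar> * S" .
    then have "\<bar>Dc\<bar> \<le> \<bar>D1\<bar>" using Sp by simp
    then show ?thesis unfolding Dc_def D1_def .
  qed
qed

lemma L2:
  fixes a b :: "'v::real_inner"
  assumes c: "0 \<le> c" "c \<le> 1"
  shows "\<bar>norm (((c+1)/2) *\<^sub>R a + ((c-1)/2) *\<^sub>R b) - norm (((c-1)/2) *\<^sub>R a + ((c+1)/2) *\<^sub>R b)\<bar>
     \<le> \<bar>norm a - norm b\<bar>"
proof -
  have 1: "((c+1)/2) *\<^sub>R a + ((c-1)/2) *\<^sub>R b = (1/2) *\<^sub>R (c *\<^sub>R (a + b) + (a - b))"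
    by (simp add: scaleR_add_right scaleR_diff_right scaleR_add_left scaleR_diff_left add_divide_distrib diff_divide_distrib algebra_simps)
  have 2: "((c-1)/2) *\<^sub>R a + ((c+1)/2) *\<^sub>R b = (1/2) *\<^sub>R (c *\<^sub>R (a + b) - (a - b))"
    by (simp add: scaleR_add_right scaleR_diff_right scaleR_add_left scaleR_diff_left add_divide_distrib diff_divide_distrib algebra_simps)
  have 4: "(a + b) + (a - b) = 2 *\<^sub>R a" "(a + b) - (a - b) = 2 *\<^sub>R b"
    by (simp_all add: scaleR_2)
  have "\<bar>norm (c *\<^sub>R (a + b) + (a - b)) - norm (c *\<^sub>R (a + b) - (a - b))\<bar> \<le> \<bar>norm ((a + b) + (a - b)) - norm ((a + b) - (a - b))\<bar>"
    by (rule core[OF c])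
  then have "\<bar>norm (c *\<^sub>R (a + b) + (a - b)) - norm (c *\<^sub>R (a + b) - (a - b))\<bar> \<le> \<bar>2 * norm a - 2 * norm b\<bar>"
    by (simp only: 4 norm_scaleR)
  then show ?thesis
    unfolding 1 2 by simp
qed
lemma real_part:
  fixes M :: "'t measure" and xt :: "'t \<Rightarrow> 'a::{real_inner,complete_space}"
  assumes fr: "rframe M xt" and nx: "\<forall>l::real. \<bar>l\<bar> = 1 \<longrightarrow> x \<noteq> l *\<^sub>R y"
  shows "\<exists>xo yo. (\<exists>a b. xo = a *\<^sub>R x + b *\<^sub>R y) \<and> (\<exists>a b. yo = a *\<^sub>R x + b *\<^sub>R y) \<and>
         norm xo = 1 \<and> norm yo \<le> 1 \<and> inner xo yo = 0 \<and>
         rphase_dist M xt x y / rmin_unimod x y \<ge> rphase_dist M xt xo yo / rmin_unimod xo yo \<and>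
         rphase_dist M xt xo yo / rmin_unimod xo yo
           = rphase_dist M xt xo yo / sqrt (1 + (norm yo)\<^sup>2)"
proof -
  from fr obtain B where meas: "\<And>z. (\<lambda>t. inner z (xt t)) \<in> borel_measurable M"
    and fin: "\<And>z. (\<integral>\<^sup>+ t. ennreal ((inner z (xt t))\<^sup>2) \<partial>M) \<le> ennreal (B * (norm z)\<^sup>2)"
    unfolding rframe_def by blast
  have pd: "rphase_dist M xt u v = DD M (\<lambda>t. \<bar>inner u (xt t)\<bar>) (\<lambda>t. \<bar>inner v (xt t)\<bar>)" for u v
    unfolding rphase_dist_def DD_def ..
  have measa: "(\<lambda>t. \<bar>inner z (xt t)\<bar>) \<in> borel_measurable M" for z
    using meas[of z] by measurable
  have finz: "(\<integral>\<^sup>+ t. ennreal ((\<bar>inner z (xt t)\<bar>)\<^sup>2) \<partial>M) < \<infinity>" for z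
    using fin[of z] by (simp add: order.strict_trans1)
  define s :: real where "s = (if inner x y \<ge> 0 then 1 else -1)"
  define y1 where "y1 = s *\<^sub>R y"
  define g where "g = inner x y1"
  have s1: "\<bar>s\<bar> = 1" unfolding s_def by simp
  have g0: "g \<ge> 0" unfolding g_def y1_def s_def by auto
  have ny1: "norm y1 = norm y" using s1 unfolding y1_def by simp
  have yy: "inner y1 y1 = inner y y" using ny1 by (metis power2_norm_eq_inner)
  have nP: "(norm (x + y1))\<^sup>2 = (norm x)\<^sup>2 + (norm y)\<^sup>2 + 2*g"
    using yy unfolding g_def by (simp add: power2_norm_eq_inner inner_add inner_commute)
  have nQ: "(norm (x - y1))\<^sup>2 = (norm x)\<^sup>2 + (norm y)\<^sup>2 - 2*g"
    using yy unfolding g_def by (simp add: power2_norm_eq_inner inner_diff inner_commute)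
  have Qne: "x - y1 \<noteq> 0" using nx s1 unfolding y1_def by auto
  define q where "q = norm (x - y1)"
  define p where "p = norm (x + y1)"
  have q0: "q > 0" using Qne unfolding q_def by simp
  have qp: "q \<le> p" unfolding q_def p_def
    by (rule power2_le_imp_le) (use nP nQ g0 in auto)
  define c where "c = q / p"
  have c0: "0 \<le> c" "c \<le> 1" using q0 qp unfolding c_def by auto
  have cp: "c * p = q" using q0 qp unfolding c_def by auto
  have e: "c\<^sup>2 * ((norm x)\<^sup>2 + (norm y)\<^sup>2 + 2*g) = (norm x)\<^sup>2 + (norm y)\<^sup>2 - 2*g"
    using cp nP nQ unfolding p_def q_def by (metis power_mult_distrib)
  define u where "u = ((c+1)/2) *\<^sub>R x + ((c-1)/2) *\<^sub>R y1"
  define v where "v = ((c-1)/2) *\<^sub>R x + ((c+1)/2) *\<^sub>R y1"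
  have iuv: "inner u v = ((c\<^sup>2 - 1)*((norm x)\<^sup>2+(norm y)\<^sup>2) + 2*(c\<^sup>2+1)*g)/4"
    unfolding u_def v_def using yy unfolding g_def
    by (simp add: inner_add inner_commute power2_norm_eq_inner[symmetric] field_simps power2_eq_square)
  have e': "c\<^sup>2 * (norm x)\<^sup>2 + c\<^sup>2 * (norm y)\<^sup>2 + 2 * c\<^sup>2 * g = (norm x)\<^sup>2 + (norm y)\<^sup>2 - 2*g"
    using e by (simp add: algebra_simps)
  have uv: "inner u v = 0" unfolding iuv using e' by (simp add: field_simps)
  have iuu: "(norm u)\<^sup>2 + (norm v)\<^sup>2 = ((c\<^sup>2 + 1)*((norm x)\<^sup>2+(norm y)\<^sup>2) + 2*(c\<^sup>2-1)*g)/2"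
    unfolding power2_norm_eq_inner u_def v_def using yy unfolding g_def
    by (simp add: inner_add inner_commute field_simps power2_eq_square)
  have nuv: "(norm u)\<^sup>2 + (norm v)\<^sup>2 = q\<^sup>2" unfolding iuu q_def nQ using e' by (simp add: field_simps)
  obtain x2 y2 where xy2: "(x2 = u \<and> y2 = v) \<or> (x2 = v \<and> y2 = u)" and n21: "norm y2 \<le> norm x2"
    by (metis nle_le)
  have i2: "inner x2 y2 = 0" using xy2 uv by (auto simp: inner_commute)
  have n2: "(norm x2)\<^sup>2 + (norm y2)\<^sup>2 = q\<^sup>2" using xy2 nuv by auto
  have pd2: "rphase_dist M xt x2 y2 = rphase_dist M xt u v" using xy2 unfolding pd by (auto simp: DD_sym)
  define k where "k = norm x2"
  have "(norm y2)\<^sup>2 \<le> k\<^sup>2" using n21 unfolding k_def by (simp add: power_mono)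
  then have "q\<^sup>2 \<le> 2 * k\<^sup>2" using n2 unfolding k_def by linarith
  moreover have "q\<^sup>2 > 0" using q0 by simp
  ultimately have "k\<^sup>2 > 0" by linarith
  then have "k \<noteq> 0" by auto
  then have k0: "k > 0" unfolding k_def by simp
  define xo where "xo = (1/k) *\<^sub>R x2"
  define yo where "yo = (1/k) *\<^sub>R y2"
  have nxo: "norm xo = 1" using k0 by (simp add: xo_def k_def)
  have nyo': "norm yo = norm y2 / k" using k0 by (simp add: yo_def)
  have nyo: "norm yo \<le> 1" unfolding nyo' using k0 n21 by (simp add: k_def)
  have ixy: "inner xo yo = 0" using i2 by (simp add: xo_def yo_def)
  have ixx: "inner xo xo = 1" using nxo by (metis power2_norm_eq_inner power_one)
  have sq: "sqrt (1 + (norm yo)\<^sup>2) = q / k"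
  proof -
    have "1 + (norm yo)\<^sup>2 = (k\<^sup>2 + (norm y2)\<^sup>2) / k\<^sup>2" unfolding nyo' using k0 by (simp add: field_simps)
    also have "\<dots> = (q / k)\<^sup>2" using n2 unfolding k_def by (simp add: power_divide)
    finally show ?thesis using q0 k0 by simp
  qed
  have nl: "norm (xo - l *\<^sub>R yo) = sqrt (1 + (norm yo)\<^sup>2)" if "\<bar>l\<bar> = 1" for l
  proof -
    have ll: "l * l = 1" using that by (metis abs_mult_self_eq mult_1_left)
    have "(norm (xo - l *\<^sub>R yo))\<^sup>2 = 1 + (norm yo)\<^sup>2"
      unfolding power2_norm_eq_inner using ixx ixy ll
      by (simp add: inner_diff inner_commute mult.assoc[symmetric])
    then show ?thesis by (metis abs_norm_cancel real_sqrt_abs)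
  qed
  have rmo: "rmin_unimod xo yo = sqrt (1 + (norm yo)\<^sup>2)"
    unfolding rmin_unimod_def
  proof (rule cInf_eq_minimum)
    show "sqrt (1 + (norm yo)\<^sup>2) \<in> {norm (xo - l *\<^sub>R yo) |l. \<bar>l\<bar> = 1}"
      unfolding mem_Collect_eq by (intro exI[of _ 1]) (use nl[of 1] in simp)
  next
    fix z assume "z \<in> {norm (xo - l *\<^sub>R yo) |l. \<bar>l\<bar> = 1}"
    then show "sqrt (1 + (norm yo)\<^sup>2) \<le> z" using nl by force
  qed
  have rmxy: "rmin_unimod x y = q"
    unfolding rmin_unimod_def
  proof (rule cInf_eq_minimum)
    show "q \<in> {norm (x - l *\<^sub>R y) |l. \<bar>l\<bar> = 1}"
      using s1 unfolding q_def y1_def by force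
  next
    fix z assume "z \<in> {norm (x - l *\<^sub>R y) |l. \<bar>l\<bar> = 1}"
    then obtain l where l: "\<bar>l\<bar> = 1" "z = norm (x - l *\<^sub>R y)" by blast
    then have "l = s \<or> l = - s" using s1 by auto
    then show "q \<le> z"
    proof
      assume "l = s" then show ?thesis using l unfolding q_def y1_def by simp
    next
      assume "l = - s" then have "z = p" using l unfolding p_def y1_def by simp
      then show ?thesis using qp by simp
    qed
  qed
  have pdxo: "rphase_dist M xt xo yo = (1/k) * rphase_dist M xt x2 y2"
  proof -
    have "(\<lambda>t. \<bar>inner xo (xt t)\<bar>) = (\<lambda>t. (1/k) * \<bar>inner x2 (xt t)\<bar>)"
      "(\<lambda>t. \<bar>inner yo (xt t)\<bar>) = (\<lambda>t. (1/k) * \<bar>inner y2 (xt t)\<bar>)"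
      using k0 by (auto simp: xo_def yo_def abs_mult)
    moreover have "DD M (\<lambda>t. (1/k) * \<bar>inner x2 (xt t)\<bar>) (\<lambda>t. (1/k) * \<bar>inner y2 (xt t)\<bar>) = (1/k) * DD M (\<lambda>t. \<bar>inner x2 (xt t)\<bar>) (\<lambda>t. \<bar>inner y2 (xt t)\<bar>)"
      by (rule DD_scale) (use k0 in \<open>auto simp: measa\<close>)
    ultimately show ?thesis unfolding pd by simp
  qed
  have mono: "rphase_dist M xt u v \<le> rphase_dist M xt x y"
    unfolding pd
  proof (rule DD_mono)
    fix t
    have a1: "inner u (xt t) = ((c+1)/2) *\<^sub>R inner x (xt t) + ((c-1)/2) *\<^sub>R inner y1 (xt t)"
      by (simp add: u_def inner_add_left)
    have a2: "inner v (xt t) = ((c-1)/2) *\<^sub>R inner x (xt t) + ((c+1)/2) *\<^sub>R inner y1 (xt t)"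
      by (simp add: v_def inner_add_left)
    have a3: "\<bar>inner y1 (xt t)\<bar> = \<bar>inner y (xt t)\<bar>" using s1 by (simp add: y1_def abs_mult)
    show "\<bar>\<bar>inner u (xt t)\<bar> - \<bar>inner v (xt t)\<bar>\<bar> \<le> \<bar>\<bar>inner x (xt t)\<bar> - \<bar>inner y (xt t)\<bar>\<bar>"
      using L2[OF c0, of "inner x (xt t)" "inner y1 (xt t)"] unfolding a1 a2 a3[symmetric] real_norm_def .
  next
    show "(\<integral>\<^sup>+ t. ennreal ((\<bar>inner x (xt t)\<bar> - \<bar>inner y (xt t)\<bar>)\<^sup>2) \<partial>M) < \<infinity>"
      by (rule DD_finite, rule measa, rule measa, simp, simp, rule finz, rule finz)
  qed
  have span: "\<exists>a b. (1/k) *\<^sub>R w = a *\<^sub>R x + b *\<^sub>R y" if "w = u \<or> w = v" for w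
    using that
  proof
    assume "w = u" then show ?thesis
      by (intro exI[of _ "(1/k) * ((c+1)/2)"] exI[of _ "(1/k) * ((c-1)/2) * s"]) (simp add: u_def y1_def scaleR_add_right)
  next
    assume "w = v" then show ?thesis
      by (intro exI[of _ "(1/k) * ((c-1)/2)"] exI[of _ "(1/k) * ((c+1)/2) * s"]) (simp add: v_def y1_def scaleR_add_right)
  qed
  have ratio: "rphase_dist M xt xo yo / rmin_unimod xo yo \<le> rphase_dist M xt x y / rmin_unimod x y"
  proof -
    have "rphase_dist M xt xo yo / rmin_unimod xo yo = rphase_dist M xt u v / q"
      unfolding rmo sq pdxo pd2 using k0 by simp
    also have "\<dots> \<le> rphase_dist M xt x y / q" using mono q0 by (simp add: divide_right_mono)
    finally show ?thesis unfolding rmxy .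
  qed
  show ?thesis
  proof (rule exI[of _ xo], rule exI[of _ yo], intro conjI)
    show "\<exists>a b. xo = a *\<^sub>R x + b *\<^sub>R y" using span[of x2] xy2 unfolding xo_def by blast
    show "\<exists>a b. yo = a *\<^sub>R x + b *\<^sub>R y" using span[of y2] xy2 unfolding yo_def by blast
  qed (use nxo nyo ixy ratio rmo in \<open>simp_all\<close>)
qed

section \<open>Complex inner product lemmas\<close>

lemma cinner_add_right: "cinner x (y + z) = cinner x y + cinner x (z::'a::complex_inner)"
  by (metis cinner_add_left cinner_commute complex_cnj_add)
lemma cinner_scaleC_right: "cinner x (a *\<^sub>C y) = cnj a * cinner x (y::'a::complex_inner)"
  by (metis cinner_scaleC_left cinner_commute complex_cnj_mult complex_cnj_cnj)
lemma cinner_scaleR_left: "cinner (r *\<^sub>R x) y = of_real r * cinner x (y::'a::complex_inner)"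
  by (simp add: scaleR_scaleC cinner_scaleC_left)
lemma cinner_scaleR_right: "cinner x (r *\<^sub>R y) = of_real r * cinner x (y::'a::complex_inner)"
  by (simp add: scaleR_scaleC cinner_scaleC_right)
lemma cinner_minus_left: "cinner (- x) y = - cinner x (y::'a::complex_inner)"
  using cinner_scaleR_left[of "-1" x y] by simp
lemma cinner_minus_right: "cinner x (- y) = - cinner x (y::'a::complex_inner)"
  using cinner_scaleR_right[of x "-1" y] by simp
lemma cinner_diff_left: "cinner (x - y) z = cinner x z - cinner y (z::'a::complex_inner)"
  by (simp only: diff_conv_add_uminus cinner_add_left cinner_minus_left)
lemma cinner_diff_right: "cinner x (y - z) = cinner x y - cinner x (z::'a::complex_inner)"
  by (simp only: diff_conv_add_uminus cinner_add_right cinner_minus_right)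
lemma norm_sq_re: "(norm x)\<^sup>2 = Re (cinner x (x::'a::complex_inner))"
  by (simp add: norm_eq_sqrt_cinner cinner_self_nonneg)
lemma cinner_self: "cinner x x = of_real ((norm (x::'a::complex_inner))\<^sup>2)"
proof -
  have "Im (cinner x x) = Im (cnj (cinner x x))" by (metis cinner_commute)
  then have "Im (cinner x x) = 0" by simp
  then show ?thesis by (simp add: complex_eq_iff norm_sq_re)
qed
lemma norm_sq_via: "cinner w w = of_real r \<Longrightarrow> (norm (w::'a::complex_inner))\<^sup>2 = r"
  by (metis cinner_self of_real_eq_iff)
lemma cinner_unimod: "cmod l = 1 \<Longrightarrow> cinner (l *\<^sub>C y) (l *\<^sub>C y) = cinner y (y::'a::complex_inner)"
proof -
  assume l: "cmod l = 1"
  have "l * cnj l = 1" using complex_norm_square[of l] l by simp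
  then show ?thesis by (simp add: cinner_scaleC_left cinner_scaleC_right mult.assoc[symmetric] mult.commute)
qed
lemma cinner_comb:
  fixes x y :: "'a::complex_inner"
  assumes "cinner x x = of_real X" "cinner y y = of_real Y" "cinner x y = of_real g" "cinner y x = of_real g"
  shows "cinner (a *\<^sub>R x + b *\<^sub>R y) (c *\<^sub>R x + d *\<^sub>R y) = of_real (a*c*X + a*d*g + b*c*g + b*d*Y)"
  using assms by (simp add: cinner_add_left cinner_add_right cinner_scaleR_left cinner_scaleR_right algebra_simps)


lemma complex_part:
  fixes M :: "'t measure" and xt :: "'t \<Rightarrow> 'a::{complex_inner,complete_space}"
  assumes fr: "cframe M xt" and nx: "\<forall>l::complex. cmod l = 1 \<longrightarrow> x \<noteq> l *\<^sub>C y"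
  shows "\<exists>xo yo. (\<exists>a b. xo = a *\<^sub>C x + b *\<^sub>C y) \<and> (\<exists>a b. yo = a *\<^sub>C x + b *\<^sub>C y) \<and>
         norm xo = 1 \<and> norm yo \<le> 1 \<and> cinner xo yo = 0 \<and>
         cphase_dist M xt x y / cmin_unimod x y \<ge> cphase_dist M xt xo yo / cmin_unimod xo yo \<and>
         cphase_dist M xt xo yo / cmin_unimod xo yo
           = cphase_dist M xt xo yo / sqrt (1 + (norm yo)\<^sup>2)"
proof -
  from fr obtain B where meas: "\<And>z. (\<lambda>t. cinner z (xt t)) \<in> borel_measurable M"
    and fin: "\<And>z. (\<integral>\<^sup>+ t. ennreal ((cmod (cinner z (xt t)))\<^sup>2) \<partial>M) \<le> ennreal (B * (norm z)\<^sup>2)"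
    unfolding cframe_def by blast
  have pd: "cphase_dist M xt u v = DD M (\<lambda>t. cmod (cinner u (xt t))) (\<lambda>t. cmod (cinner v (xt t)))" for u v
    unfolding cphase_dist_def DD_def ..
  have measa: "(\<lambda>t. cmod (cinner z (xt t))) \<in> borel_measurable M" for z
    using meas[of z] by measurable
  have finz: "(\<integral>\<^sup>+ t. ennreal ((cmod (cinner z (xt t)))\<^sup>2) \<partial>M) < \<infinity>" for z
    using fin[of z] by (simp add: order.strict_trans1)
  define z0 where "z0 = cinner x y"
  define g where "g = cmod z0"
  define s :: complex where "s = (if z0 = 0 then 1 else z0 / of_real g)"
  define y1 where "y1 = s *\<^sub>C y"
  have s1: "cmod s = 1" unfolding s_def g_def by (simp add: norm_divide)
  have g0: "g \<ge> 0" unfolding g_def by simp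
  have gx: "cinner x y1 = of_real g"
  proof (cases "z0 = 0")
    case True then show ?thesis unfolding y1_def g_def by (simp add: cinner_scaleC_right z0_def[symmetric])
  next
    case False
    then have "g \<noteq> 0" unfolding g_def by simp
    have "cinner x y1 = cnj z0 * z0 / of_real g" unfolding y1_def s_def using False
      by (simp add: cinner_scaleC_right z0_def[symmetric])
    also have "\<dots> = of_real (g\<^sup>2) / of_real g" unfolding g_def complex_norm_square by (simp add: mult.commute)
    also have "\<dots> = of_real g" using \<open>g \<noteq> 0\<close> by (simp add: power2_eq_square)
    finally show ?thesis .
  qed
  have gy: "cinner y1 x = of_real g" by (metis cinner_commute gx complex_cnj_complex_of_real)
  have yy: "cinner y1 y1 = cinner y y" unfolding y1_def by (rule cinner_unimod[OF s1])
  have cxx: "cinner x x = of_real ((norm x)\<^sup>2)" by (rule cinner_self)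
  have cyy: "cinner y1 y1 = of_real ((norm y)\<^sup>2)" unfolding yy by (rule cinner_self)
  note comb = cinner_comb[OF cxx cyy gx gy]
  have nP: "(norm (x + y1))\<^sup>2 = (norm x)\<^sup>2 + (norm y)\<^sup>2 + 2*g"
    using comb[of 1 1 1 1] by (intro norm_sq_via) (simp add: algebra_simps)
  have nQ: "(norm (x - y1))\<^sup>2 = (norm x)\<^sup>2 + (norm y)\<^sup>2 - 2*g"
    using comb[of 1 "-1" 1 "-1"] by (intro norm_sq_via) (simp add: algebra_simps)
  have Qne: "x - y1 \<noteq> 0" using nx s1 unfolding y1_def by auto
  define q where "q = norm (x - y1)"
  define p where "p = norm (x + y1)"
  have q0: "q > 0" using Qne unfolding q_def by simp
  have qp: "q \<le> p" unfolding q_def p_def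
    by (rule power2_le_imp_le) (use nP nQ g0 in auto)
  define c where "c = q / p"
  have c0: "0 \<le> c" "c \<le> 1" using q0 qp unfolding c_def by auto
  have cp: "c * p = q" using q0 qp unfolding c_def by auto
  have e: "c\<^sup>2 * ((norm x)\<^sup>2 + (norm y)\<^sup>2 + 2*g) = (norm x)\<^sup>2 + (norm y)\<^sup>2 - 2*g"
    using cp nP nQ unfolding p_def q_def by (metis power_mult_distrib)
  have e': "c\<^sup>2 * (norm x)\<^sup>2 + c\<^sup>2 * (norm y)\<^sup>2 + 2 * c\<^sup>2 * g = (norm x)\<^sup>2 + (norm y)\<^sup>2 - 2*g"
    using e by (simp add: algebra_simps)
  define u where "u = ((c+1)/2) *\<^sub>R x + ((c-1)/2) *\<^sub>R y1"
  define v where "v = ((c-1)/2) *\<^sub>R x + ((c+1)/2) *\<^sub>R y1"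
  have iuv: "cinner u v = of_real (((c\<^sup>2 - 1)*((norm x)\<^sup>2+(norm y)\<^sup>2) + 2*(c\<^sup>2+1)*g)/4)"
    unfolding u_def v_def comb by (simp add: field_simps power2_eq_square)
  have uv: "cinner u v = 0" unfolding iuv using e' by (simp add: field_simps)
  have nu: "(norm u)\<^sup>2 = ((c+1)/2)*((c+1)/2)*(norm x)\<^sup>2 + 2*((c+1)/2)*((c-1)/2)*g + ((c-1)/2)*((c-1)/2)*(norm y)\<^sup>2"
    unfolding u_def by (rule norm_sq_via, subst comb, rule arg_cong[where f=of_real]) (simp add: field_simps)
  have nv: "(norm v)\<^sup>2 = ((c-1)/2)*((c-1)/2)*(norm x)\<^sup>2 + 2*((c-1)/2)*((c+1)/2)*g + ((c+1)/2)*((c+1)/2)*(norm y)\<^sup>2"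
    unfolding v_def by (rule norm_sq_via, subst comb, rule arg_cong[where f=of_real]) (simp add: field_simps)
  have iuu: "(norm u)\<^sup>2 + (norm v)\<^sup>2 = ((c\<^sup>2 + 1)*((norm x)\<^sup>2+(norm y)\<^sup>2) + 2*(c\<^sup>2-1)*g)/2"
    unfolding nu nv by (simp add: field_simps power2_eq_square)
  have nuv: "(norm u)\<^sup>2 + (norm v)\<^sup>2 = q\<^sup>2" unfolding iuu q_def nQ using e' by (simp add: field_simps)
  obtain x2 y2 where xy2: "(x2 = u \<and> y2 = v) \<or> (x2 = v \<and> y2 = u)" and n21: "norm y2 \<le> norm x2"
    by (metis nle_le)
  have i2: "cinner x2 y2 = 0" using xy2 uv by (auto simp: cinner_commute[of v u])
  have n2: "(norm x2)\<^sup>2 + (norm y2)\<^sup>2 = q\<^sup>2" using xy2 nuv by auto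
  have pd2: "cphase_dist M xt x2 y2 = cphase_dist M xt u v" using xy2 unfolding pd by (auto simp: DD_sym)
  define k where "k = norm x2"
  have "(norm y2)\<^sup>2 \<le> k\<^sup>2" using n21 unfolding k_def by (simp add: power_mono)
  then have "q\<^sup>2 \<le> 2 * k\<^sup>2" using n2 unfolding k_def by linarith
  moreover have "q\<^sup>2 > 0" using q0 by simp
  ultimately have "k\<^sup>2 > 0" by linarith
  then have "k \<noteq> 0" by auto
  then have k0: "k > 0" unfolding k_def by simp
  define xo where "xo = (1/k) *\<^sub>R x2"
  define yo where "yo = (1/k) *\<^sub>R y2"
  have nxo: "norm xo = 1" using k0 by (simp add: xo_def k_def)
  have nyo': "norm yo = norm y2 / k" using k0 by (simp add: yo_def)
  have nyo: "norm yo \<le> 1" unfolding nyo' using k0 n21 by (simp add: k_def)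
  have ixy: "cinner xo yo = 0" using i2 by (simp add: xo_def yo_def cinner_scaleR_left cinner_scaleR_right)
  have iyx: "cinner yo xo = 0" using ixy by (metis cinner_commute complex_cnj_zero)
  have ixx: "cinner xo xo = 1" using nxo by (simp add: cinner_self)
  have sq: "sqrt (1 + (norm yo)\<^sup>2) = q / k"
  proof -
    have "1 + (norm yo)\<^sup>2 = (k\<^sup>2 + (norm y2)\<^sup>2) / k\<^sup>2" unfolding nyo' using k0 by (simp add: field_simps)
    also have "\<dots> = (q / k)\<^sup>2" using n2 unfolding k_def by (simp add: power_divide)
    finally show ?thesis using q0 k0 by simp
  qed
  have nl: "norm (xo - l *\<^sub>C yo) = sqrt (1 + (norm yo)\<^sup>2)" if "cmod l = 1" for l
  proof -
    have "(norm (xo - l *\<^sub>C yo))\<^sup>2 = Re (cinner (xo - l *\<^sub>C yo) (xo - l *\<^sub>C yo))" by (rule norm_sq_re)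
    also have "\<dots> = 1 + (norm yo)\<^sup>2"
    proof -
      have "cinner (xo - l *\<^sub>C yo) (xo - l *\<^sub>C yo) = (cinner xo xo - cinner (l *\<^sub>C yo) xo) - (cinner xo (l *\<^sub>C yo) - cinner (l *\<^sub>C yo) (l *\<^sub>C yo))"
        by (simp only: cinner_diff_left cinner_diff_right)
      also have "\<dots> = 1 + cinner yo yo" unfolding cinner_unimod[OF that, of yo] using ixx ixy iyx
        by (simp add: cinner_scaleC_left cinner_scaleC_right)
      finally show ?thesis by (simp add: norm_sq_re)
    qed
    finally show ?thesis by (metis abs_norm_cancel real_sqrt_abs)
  qed
  have rmo: "cmin_unimod xo yo = sqrt (1 + (norm yo)\<^sup>2)"
    unfolding cmin_unimod_def
  proof (rule cInf_eq_minimum)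
    show "sqrt (1 + (norm yo)\<^sup>2) \<in> {norm (xo - l *\<^sub>C yo) |l. cmod l = 1}"
      unfolding mem_Collect_eq by (intro exI[of _ 1]) (use nl[of 1] in simp)
  next
    fix z assume "z \<in> {norm (xo - l *\<^sub>C yo) |l. cmod l = 1}"
    then show "sqrt (1 + (norm yo)\<^sup>2) \<le> z" using nl by force
  qed
  have rmxy: "cmin_unimod x y = q"
    unfolding cmin_unimod_def
  proof (rule cInf_eq_minimum)
    show "q \<in> {norm (x - l *\<^sub>C y) |l. cmod l = 1}"
      unfolding mem_Collect_eq q_def y1_def by (intro exI[of _ s]) (use s1 in simp)
  next
    fix z assume "z \<in> {norm (x - l *\<^sub>C y) |l. cmod l = 1}"
    then obtain l where l: "cmod l = 1" "z = norm (x - l *\<^sub>C y)" by blast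
    define w where "w = cnj l * z0"
    have cw: "cmod w = g" unfolding w_def g_def using l(1) by (simp add: norm_mult)
    have "(norm (x - l *\<^sub>C y))\<^sup>2 = Re (cinner (x - l *\<^sub>C y) (x - l *\<^sub>C y))" by (rule norm_sq_re)
    also have "\<dots> = (norm x)\<^sup>2 + (norm y)\<^sup>2 - 2 * Re w"
    proof -
      have "cinner (l *\<^sub>C y) x = cnj w" unfolding w_def z0_def
        by (simp add: cinner_scaleC_left cinner_commute[of y x])
      moreover have "cinner x (l *\<^sub>C y) = w" unfolding w_def z0_def by (simp add: cinner_scaleC_right)
      moreover have "cinner (x - l *\<^sub>C y) (x - l *\<^sub>C y) = (cinner x x - cinner (l *\<^sub>C y) x) - (cinner x (l *\<^sub>C y) - cinner (l *\<^sub>C y) (l *\<^sub>C y))"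
        by (simp only: cinner_diff_left cinner_diff_right)
      ultimately show ?thesis unfolding cinner_unimod[OF l(1), of y]
        by (simp add: norm_sq_re)
    qed
    also have "\<dots> \<ge> q\<^sup>2" unfolding q_def nQ using complex_Re_le_cmod[of w] cw by simp
    finally have "q\<^sup>2 \<le> z\<^sup>2" using l(2) by simp
    then show "q \<le> z" by (rule power2_le_imp_le) (use l(2) in simp)
  qed
  have pdxo: "cphase_dist M xt xo yo = (1/k) * cphase_dist M xt x2 y2"
  proof -
    have "(\<lambda>t. cmod (cinner xo (xt t))) = (\<lambda>t. (1/k) * cmod (cinner x2 (xt t)))"
      "(\<lambda>t. cmod (cinner yo (xt t))) = (\<lambda>t. (1/k) * cmod (cinner y2 (xt t)))"
      using k0 by (auto simp: xo_def yo_def cinner_scaleR_left norm_mult norm_divide)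
    moreover have "DD M (\<lambda>t. (1/k) * cmod (cinner x2 (xt t))) (\<lambda>t. (1/k) * cmod (cinner y2 (xt t))) = (1/k) * DD M (\<lambda>t. cmod (cinner x2 (xt t))) (\<lambda>t. cmod (cinner y2 (xt t)))"
      by (rule DD_scale) (use k0 in \<open>auto simp: measa\<close>)
    ultimately show ?thesis unfolding pd by simp
  qed
  have mono: "cphase_dist M xt u v \<le> cphase_dist M xt x y"
    unfolding pd
  proof (rule DD_mono)
    fix t
    have a1: "cinner u (xt t) = ((c+1)/2) *\<^sub>R cinner x (xt t) + ((c-1)/2) *\<^sub>R cinner y1 (xt t)"
      by (simp add: u_def cinner_add_left cinner_scaleR_left scaleR_conv_of_real)
    have a2: "cinner v (xt t) = ((c-1)/2) *\<^sub>R cinner x (xt t) + ((c+1)/2) *\<^sub>R cinner y1 (xt t)"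
      by (simp add: v_def cinner_add_left cinner_scaleR_left scaleR_conv_of_real)
    have a3: "cmod (cinner y1 (xt t)) = cmod (cinner y (xt t))" using s1 by (simp add: y1_def cinner_scaleC_left norm_mult)
    show "\<bar>cmod (cinner u (xt t)) - cmod (cinner v (xt t))\<bar> \<le> \<bar>cmod (cinner x (xt t)) - cmod (cinner y (xt t))\<bar>"
      using L2[OF c0, of "cinner x (xt t)" "cinner y1 (xt t)"] unfolding a1 a2 a3 .
  next
    show "(\<integral>\<^sup>+ t. ennreal ((cmod (cinner x (xt t)) - cmod (cinner y (xt t)))\<^sup>2) \<partial>M) < \<infinity>"
      by (rule DD_finite, rule measa, rule measa, simp, simp, rule finz, rule finz)
  qed
  have span: "\<exists>a b. (1/k) *\<^sub>R w = a *\<^sub>C x + b *\<^sub>C y" if "w = u \<or> w = v" for w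
    using that
  proof
    assume "w = u" then show ?thesis
      by (intro exI[of _ "of_real ((1/k) * ((c+1)/2))"] exI[of _ "of_real ((1/k) * ((c-1)/2)) * s"])
        (simp add: u_def y1_def scaleR_scaleC scaleC_add_right scaleC_scaleC)
  next
    assume "w = v" then show ?thesis
      by (intro exI[of _ "of_real ((1/k) * ((c-1)/2))"] exI[of _ "of_real ((1/k) * ((c+1)/2)) * s"])
        (simp add: v_def y1_def scaleR_scaleC scaleC_add_right scaleC_scaleC)
  qed
  have ratio: "cphase_dist M xt xo yo / cmin_unimod xo yo \<le> cphase_dist M xt x y / cmin_unimod x y"
  proof -
    have "cphase_dist M xt xo yo / cmin_unimod xo yo = cphase_dist M xt u v / q"
      unfolding rmo sq pdxo pd2 using k0 by simp
    also have "\<dots> \<le> cphase_dist M xt x y / q" using mono q0 by (simp add: divide_right_mono)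
    finally show ?thesis unfolding rmxy .
  qed
  show ?thesis
  proof (rule exI[of _ xo], rule exI[of _ yo], intro conjI)
    show "\<exists>a b. xo = a *\<^sub>C x + b *\<^sub>C y" using span[of x2] xy2 unfolding xo_def by blast
    show "\<exists>a b. yo = a *\<^sub>C x + b *\<^sub>C y" using span[of y2] xy2 unfolding yo_def by blast
  qed (use nxo nyo ixy ratio rmo in \<open>simp_all\<close>)
qed

theorem theorem2p1:
  shows
  "(\<forall>(M :: 't measure) (xt :: 't \<Rightarrow> 'a::{real_inner,complete_space}) x y.
      rframe M xt \<and> (\<forall>l::real. \<bar>l\<bar> = 1 \<longrightarrow> x \<noteq> l *\<^sub>R y) \<longrightarrow>
      (\<exists>xo yo. (\<exists>a b. xo = a *\<^sub>R x + b *\<^sub>R y) \<and> (\<exists>a b. yo = a *\<^sub>R x + b *\<^sub>R y) \<and>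
         norm xo = 1 \<and> norm yo \<le> 1 \<and> inner xo yo = 0 \<and>
         rphase_dist M xt x y / rmin_unimod x y \<ge> rphase_dist M xt xo yo / rmin_unimod xo yo \<and>
         rphase_dist M xt xo yo / rmin_unimod xo yo
           = rphase_dist M xt xo yo / sqrt (1 + (norm yo)\<^sup>2)))
   \<and>
   (\<forall>(M :: 's measure) (xt :: 's \<Rightarrow> 'b::{complex_inner,complete_space}) x y.
      cframe M xt \<and> (\<forall>l::complex. cmod l = 1 \<longrightarrow> x \<noteq> l *\<^sub>C y) \<longrightarrow>
      (\<exists>xo yo. (\<exists>a b. xo = a *\<^sub>C x + b *\<^sub>C y) \<and> (\<exists>a b. yo = a *\<^sub>C x + b *\<^sub>C y) \<and>
         norm xo = 1 \<and> norm yo \<le> 1 \<and> cinner xo yo = 0 \<and>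
         cphase_dist M xt x y / cmin_unimod x y \<ge> cphase_dist M xt xo yo / cmin_unimod xo yo \<and>
         cphase_dist M xt xo yo / cmin_unimod xo yo
           = cphase_dist M xt xo yo / sqrt (1 + (norm yo)\<^sup>2)))"
  using real_part complex_part by blast

end
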